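(* Let $\mathcal{M}_1,\mathcal{M}_2$ be matroids on a finite ground set $E$, let $T$ be independent in both, let $p\in(0,1)$, and let $\Psi(e)$, $e\in T$, be i.i.d. with $\Pr[\Psi(e)=1]=1-p$; define $S=\{e\in T:\Psi(e)=1\}$. Let $i\in\{1,2\}$ and $\bar\imath$ the other index. Let $\tilde E\subseteq\mathrm{span}_i(T)$ and let $\tilde I\subseteq\tilde E$ be independent in $\mathcal{M}_i$ and in $\mathcal{M}_{\bar\imath}/T$. Then for any fixed arrival order of the elements of $\tilde E$, $$\mathbb{E}_\Psi\left[\left|\mathrm{Greedy}(\mathcal{M}_i/S,\ \mathcal{M}_{\bar\imath}/T,\ \tilde E)\right|\right]\ge\frac{1}{1+p}\,p\,|\tilde I|.$$
   Context: $\mathrm{span}_i(T)=\{e\in E:\mathrm{rank}_{\mathcal{M}_i}(T\cup\{e\})=\mathrm{rank}_{\mathcal{M}_i}(T)\}$. For a matroid $\mathcal{M}$ and an independent set $X$, the contraction $\mathcal{M}/X$ has independent sets exactly those $A$ with $A\cap X=\emptyset$ and $A\cup X$ independent in $\mathcal{M}$. $\mathrm{Greedy}(\mathcal{N}_1,\mathcal{N}_2,\tilde E)$ processes the elements of $\tilde E$ in the given order, starting from the empty set, and adds an element whenever the current set together with it is independent in both $\mathcal{N}_1$ and $\mathcal{N}_2$; it returns the resulting set. *)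

theory Defs
  imports "HOL-Probability.Probability"
begin

definition matroid :: "'a set \<Rightarrow> ('a set \<Rightarrow> bool) \<Rightarrow> bool" where
  "matroid E indep \<longleftrightarrow>
     finite E \<and>
     (\<forall>A. indep A \<longrightarrow> A \<subseteq> E) \<and>
     indep {} \<and>
     (\<forall>A B. indep B \<and> A \<subseteq> B \<longrightarrow> indep A) \<and>
     (\<forall>A B. indep A \<and> indep B \<and> card A < card B \<longrightarrow> (\<exists>e\<in>B - A. indep (insert e A)))"

definition mrank :: "('a set \<Rightarrow> bool) \<Rightarrow> 'a set \<Rightarrow> nat" where
  "mrank indep X = Max {card Y | Y. Y \<subseteq> X \<and> indep Y}"

definition mspan :: "'a set \<Rightarrow> ('a set \<Rightarrow> bool) \<Rightarrow> 'a set \<Rightarrow> 'a set" where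
  "mspan E indep T = {e \<in> E. mrank indep (insert e T) = mrank indep T}"

text \<open>Contraction M/X (for X independent in M).\<close>
definition contract :: "('a set \<Rightarrow> bool) \<Rightarrow> 'a set \<Rightarrow> 'a set \<Rightarrow> bool" where
  "contract indep X = (\<lambda>A. A \<inter> X = {} \<and> indep (A \<union> X))"

definition greedy :: "('a set \<Rightarrow> bool) \<Rightarrow> ('a set \<Rightarrow> bool) \<Rightarrow> 'a list \<Rightarrow> 'a set" where
  "greedy N1 N2 xs =
     fold (\<lambda>e I. if N1 (insert e I) \<and> N2 (insert e I) then insert e I else I) xs {}"

end

theory Submission
  imports Defs
begin

lemma exp_insert:
  fixes F :: "('a \<Rightarrow> bool) \<Rightarrow> real"
  assumes "finite A" "x \<notin> A" "0 \<le> q" "q \<le> 1" "\<And>g. \<bar>F g\<bar> \<le> B"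
  shows "measure_pmf.expectation (Pi_pmf (insert x A) False (\<lambda>_. bernoulli_pmf q)) F =
     q * measure_pmf.expectation (Pi_pmf A False (\<lambda>_. bernoulli_pmf q)) (\<lambda>g. F (g(x:=True)))
   + (1-q) * measure_pmf.expectation (Pi_pmf A False (\<lambda>_. bernoulli_pmf q)) (\<lambda>g. F (g(x:=False)))"
proof -
  let ?P = "Pi_pmf A False (\<lambda>_. bernoulli_pmf q)"
  have eq: "Pi_pmf (insert x A) False (\<lambda>_. bernoulli_pmf q) = bind_pmf (bernoulli_pmf q) (\<lambda>y. map_pmf (\<lambda>f. f(x:=y)) ?P)"
    using Pi_pmf_insert'[OF assms(1,2), of False "\<lambda>_. bernoulli_pmf q"] by (simp add: map_pmf_def)
  have "measure_pmf.expectation (Pi_pmf (insert x A) False (\<lambda>_. bernoulli_pmf q)) F =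
     measure_pmf.expectation (bernoulli_pmf q) (\<lambda>y. measure_pmf.expectation (map_pmf (\<lambda>f. f(x:=y)) ?P) F)"
    unfolding eq measure_pmf_bind
    apply (rule integral_bind[where K="count_space UNIV" and B=B and B'=1])
    using assms(5) by (auto simp: measure_pmf.emeasure_space_1 measure_pmf_in_subprob_algebra)
  also have "\<dots> = q * measure_pmf.expectation (map_pmf (\<lambda>f. f(x:=True)) ?P) F
     + (1-q) * measure_pmf.expectation (map_pmf (\<lambda>f. f(x:=False)) ?P) F"
    using assms(3,4) by (simp add: algebra_simps)
  finally show ?thesis by simp
qed

lemma integrable_Pi:
  fixes F :: "('a \<Rightarrow> bool) \<Rightarrow> real"
  assumes "\<And>g. \<bar>F g\<bar> \<le> B"
  shows "integrable (measure_pmf (Pi_pmf A False (\<lambda>_. bernoulli_pmf q))) F"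
  apply (rule measure_pmf.integrable_const_bound[where B=B])
  using assms by auto

section \<open>Matroid basics\<close>

lemma m_fin: "matroid E M \<Longrightarrow> M A \<Longrightarrow> finite A"
  unfolding matroid_def by (meson finite_subset)

lemma m_sub: "matroid E M \<Longrightarrow> M B \<Longrightarrow> A \<subseteq> B \<Longrightarrow> M A"
  unfolding matroid_def by blast

lemma m_aug: "matroid E M \<Longrightarrow> M A \<Longrightarrow> M B \<Longrightarrow> card A < card B \<Longrightarrow> \<exists>e\<in>B - A. M (insert e A)"
  unfolding matroid_def by blast

lemma m_grow:
  assumes m: "matroid E M" and "M I"
  shows "M Y0 \<Longrightarrow> card Y0 \<le> card I \<Longrightarrow> \<exists>Y. Y0 \<subseteq> Y \<and> Y \<subseteq> Y0 \<union> I \<and> M Y \<and> card Y = card I"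
proof (induction "card I - card Y0" arbitrary: Y0)
  case 0
  then show ?case by auto
next
  case (Suc k)
  then have "card Y0 < card I" by simp
  then obtain e where e: "e \<in> I - Y0" "M (insert e Y0)" using m_aug[OF m Suc.prems(1) \<open>M I\<close>] by blast
  have fin: "finite Y0" using m_fin[OF m Suc.prems(1)] .
  have c: "card (insert e Y0) = Suc (card Y0)" using e fin by simp
  have "k = card I - card (insert e Y0)" using Suc.hyps(2) c by simp
  then obtain Y where Y: "insert e Y0 \<subseteq> Y" "Y \<subseteq> insert e Y0 \<union> I" "M Y" "card Y = card I"
    using Suc.hyps(1)[of "insert e Y0"] e c \<open>card Y0 < card I\<close> by auto
  then show ?case using e by blast
qed

lemma exch1:
  assumes m: "matroid E M" and "M I" "M {x}"
  shows "\<exists>I'. I' \<subseteq> I - {x} \<and> M (insert x I') \<and> card I \<le> card I' + 1"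
proof (cases "I = {}")
  case True then show ?thesis using assms by auto
next
  case False
  have fin: "finite I" using m_fin[OF m \<open>M I\<close>] .
  show ?thesis
  proof (cases "x \<in> I")
    case True
    then show ?thesis using \<open>M I\<close> fin
      by (intro exI[of _ "I - {x}"]) (auto simp: insert_absorb card_Diff_singleton)
  next
    case xn: False
    have "card {x} \<le> card I" using False fin by (simp add: Suc_leI card_gt_0_iff)
    then obtain Y where Y: "{x} \<subseteq> Y" "Y \<subseteq> {x} \<union> I" "M Y" "card Y = card I"
      using m_grow[OF m \<open>M I\<close> \<open>M {x}\<close>] by blast
    have fY: "finite Y" using m_fin[OF m \<open>M Y\<close>] .
    have "insert x (Y - {x}) = Y" using Y by auto
    moreover have "card (Y - {x}) + 1 = card Y" using Y fY card_Suc_Diff1[OF fY, of x] by simp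
    ultimately show ?thesis using Y
      by (intro exI[of _ "Y - {x}"]) auto
  qed
qed

lemma matroid_contract:
  assumes m: "matroid E M" and X: "M X"
  shows "matroid E (contract M X)"
proof -
  have fX: "finite X" using m_fin[OF m X] .
  have aug: "\<exists>e\<in>B - A. contract M X (insert e A)"
    if A: "contract M X A" and B: "contract M X B" and c: "card A < card B" for A B
  proof -
    have fA: "finite A" using A m_fin[OF m] unfolding contract_def by (meson finite_Un)
    have fB: "finite B" using B m_fin[OF m] unfolding contract_def by (meson finite_Un)
    have "card (A \<union> X) < card (B \<union> X)"
      using A B c fA fB fX unfolding contract_def by (simp add: card_Un_disjoint)
    then obtain e where e: "e \<in> (B \<union> X) - (A \<union> X)" "M (insert e (A \<union> X))"
      using m_aug[OF m] A B unfolding contract_def by blast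
    then show ?thesis using A unfolding contract_def by auto
  qed
  have sub: "\<forall>A. contract M X A \<longrightarrow> A \<subseteq> E"
    using m unfolding matroid_def contract_def by blast
  have her: "\<forall>A B. contract M X B \<and> A \<subseteq> B \<longrightarrow> contract M X A"
  proof (intro allI impI)
    fix A B assume "contract M X B \<and> A \<subseteq> B"
    then have B: "B \<inter> X = {}" "M (B \<union> X)" "A \<subseteq> B" unfolding contract_def by auto
    have "A \<union> X \<subseteq> B \<union> X" using B by auto
    then have "M (A \<union> X)" using m_sub[OF m B(2)] by blast
    moreover have "A \<inter> X = {}" using B by auto
    ultimately show "contract M X A" unfolding contract_def by auto
  qed
  have fE: "finite E" using m unfolding matroid_def by blast
  have em: "contract M X {}" using X unfolding contract_def by simp
  show ?thesis unfolding matroid_def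
    using fE sub em her aug by blast
qed

lemma fund:
  assumes m: "matroid E M" and "M T" "M {x}" "x \<notin> T" "\<not> M (insert x T)"
  shows "\<exists>t\<in>T. M (insert x (T - {t}))"
proof -
  have fT: "finite T" using m_fin[OF m \<open>M T\<close>] .
  have ne: "T \<noteq> {}" using assms by auto
  have "card {x} \<le> card T" using ne fT by (simp add: Suc_leI card_gt_0_iff)
  then obtain Y where Y: "{x} \<subseteq> Y" "Y \<subseteq> {x} \<union> T" "M Y" "card Y = card T"
    using m_grow[OF m \<open>M T\<close> \<open>M {x}\<close>] by blast
  have "Y \<noteq> insert x T" using Y assms by auto
  then obtain t where t: "t \<in> insert x T" "t \<notin> Y" using Y by auto
  have tT: "t \<in> T" using t Y by auto
  have sub: "Y \<subseteq> insert x (T - {t})" using Y t by auto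
  have "card (insert x (T - {t})) = card T" using tT fT assms(4) card_Suc_Diff1[OF fT tT] by simp
  then have "Y = insert x (T - {t})" using sub Y fT by (intro card_subset_eq) auto
  then show ?thesis using Y tT by auto
qed

section \<open>Greedy\<close>

definition gstep :: "('a set \<Rightarrow> bool) \<Rightarrow> ('a set \<Rightarrow> bool) \<Rightarrow> 'a \<Rightarrow> 'a set \<Rightarrow> 'a set" where
  "gstep N1 N2 e I = (if N1 (insert e I) \<and> N2 (insert e I) then insert e I else I)"

lemma greedy_fold: "greedy N1 N2 xs = fold (gstep N1 N2) xs {}"
  unfolding greedy_def gstep_def[abs_def] by (rule refl)

lemma fold_sub: "fold (gstep N1 N2) xs K \<subseteq> K \<union> set xs"
proof (induction xs arbitrary: K)
  case Nil then show ?case by simp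
next
  case (Cons y ys)
  have "fold (gstep N1 N2) (y#ys) K = fold (gstep N1 N2) ys (gstep N1 N2 y K)" by simp
  also have "\<dots> \<subseteq> gstep N1 N2 y K \<union> set ys" by (rule Cons.IH)
  also have "\<dots> \<subseteq> K \<union> set (y#ys)" by (auto simp: gstep_def)
  finally show ?case .
qed

lemma fold_contract:
  "K \<inter> I = {} \<Longrightarrow> fold (gstep N1 N2) xs (K \<union> I) = fold (gstep (contract N1 I) (contract N2 I)) xs K \<union> I"
proof (induction xs arbitrary: K)
  case Nil then show ?case by simp
next
  case (Cons y ys)
  show ?case
  proof (cases "y \<in> I")
    case True
    have 1: "gstep N1 N2 y (K \<union> I) = K \<union> I" using True by (auto simp: gstep_def insert_absorb)
    have 2: "gstep (contract N1 I) (contract N2 I) y K = K" using True by (auto simp: gstep_def contract_def)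
    show ?thesis using Cons 1 2 by simp
  next
    case False
    have 1: "gstep N1 N2 y (K \<union> I) = gstep (contract N1 I) (contract N2 I) y K \<union> I"
      using False Cons.prems by (auto simp: gstep_def contract_def)
    have 3: "gstep (contract N1 I) (contract N2 I) y K \<inter> I = {}"
      using False Cons.prems by (auto simp: gstep_def)
    show ?thesis using Cons.IH[OF 3] 1 by simp
  qed
qed

lemma greedy_rej: "\<not> (N1 {x} \<and> N2 {x}) \<Longrightarrow> greedy N1 N2 (x#xs) = greedy N1 N2 xs"
  by (auto simp: greedy_fold gstep_def)

lemma greedy_acc: "N1 {x} \<Longrightarrow> N2 {x} \<Longrightarrow>
   greedy N1 N2 (x#xs) = insert x (greedy (contract N1 {x}) (contract N2 {x}) xs)"
proof -
  assume a: "N1 {x}" "N2 {x}"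
  have "greedy N1 N2 (x#xs) = fold (gstep N1 N2) xs ({} \<union> {x})"
    using a by (simp add: greedy_fold gstep_def)
  also have "\<dots> = fold (gstep (contract N1 {x}) (contract N2 {x})) xs {} \<union> {x}"
    by (rule fold_contract) simp
  finally show ?thesis by (simp add: greedy_fold)
qed

lemma greedy_sub: "greedy N1 N2 xs \<subseteq> set xs"
  using fold_sub[of N1 N2 xs "{}"] by (simp add: greedy_fold)

lemma card_greedy: "card (greedy N1 N2 xs) \<le> length xs"
  by (meson card_length card_mono dual_order.trans greedy_sub List.finite_set)

lemma contract_swap: "x \<notin> S \<Longrightarrow> contract (contract M S) {x} = contract (contract M {x}) S"
  unfolding contract_def by (auto simp: fun_eq_iff Un_ac)

lemma contract_insert: "t \<notin> S \<Longrightarrow> contract M (insert t S) = contract (contract M {t}) S"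
  unfolding contract_def by (auto simp: fun_eq_iff Un_ac)

lemma mrank_indep:
  assumes m: "matroid E M" and "M X"
  shows "mrank M X = card X"
proof -
  have fX: "finite X" using m_fin[OF m \<open>M X\<close>] .
  have "{card Y | Y. Y \<subseteq> X \<and> M Y} \<subseteq> card ` Pow X" by auto
  then have fin: "finite {card Y | Y. Y \<subseteq> X \<and> M Y}" using fX by (meson finite_Pow_iff finite_imageI finite_subset)
  show ?thesis unfolding mrank_def
    by (rule Max_eqI[OF fin]) (use fX \<open>M X\<close> in \<open>auto intro: card_mono\<close>)
qed

lemma span_imp:
  assumes m: "matroid E M" and "M T" and e: "e \<in> mspan E M T"
  shows "e \<in> T \<or> \<not> M (insert e T)"
proof (rule ccontr)
  assume "\<not> (e \<in> T \<or> \<not> M (insert e T))"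
  then have a: "e \<notin> T" "M (insert e T)" by auto
  have fT: "finite T" using m_fin[OF m \<open>M T\<close>] .
  have "mrank M (insert e T) = card (insert e T)" by (rule mrank_indep[OF m a(2)])
  also have "\<dots> = Suc (card T)" using a fT by simp
  finally have "mrank M (insert e T) \<noteq> mrank M T" using mrank_indep[OF m \<open>M T\<close>] by simp
  then show False using e unfolding mspan_def by auto
qed

lemma gen:
  fixes p :: real and xs :: "'a list" and E :: "'a set"
  assumes p: "0 < p" "p < 1"
  shows "matroid E M \<Longrightarrow> matroid E N \<Longrightarrow> M T \<Longrightarrow> (\<forall>A. N A \<longrightarrow> A \<inter> T = {}) \<Longrightarrow>
    (\<forall>e\<in>set xs. e \<in> T \<or> \<not> M (insert e T)) \<Longrightarrow> I \<subseteq> set xs \<Longrightarrow> M I \<Longrightarrow> N I \<Longrightarrow> distinct xs \<Longrightarrow>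
    p/(1+p) * real (card I) \<le> measure_pmf.expectation (Pi_pmf T False (\<lambda>_. bernoulli_pmf (1-p)))
       (\<lambda>\<Psi>. real (card (greedy (contract M {e\<in>T. \<Psi> e}) N xs)))"
proof (induction xs arbitrary: M N T I)
  case Nil
  then show ?case by (simp add: greedy_def)
next
  case (Cons x xs)
  define c where "c = p/(1+p)"
  have c0: "0 \<le> c" using p unfolding c_def by simp
  have key: "\<And>M T I. card T = n \<Longrightarrow> matroid E M \<Longrightarrow> M T \<Longrightarrow> (\<forall>A. N A \<longrightarrow> A \<inter> T = {}) \<Longrightarrow>
    (\<forall>e\<in>set (x#xs). e \<in> T \<or> \<not> M (insert e T)) \<Longrightarrow> I \<subseteq> set (x#xs) \<Longrightarrow> M I \<Longrightarrow> N I \<Longrightarrow>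
    c * real (card I) \<le> measure_pmf.expectation (Pi_pmf T False (\<lambda>_. bernoulli_pmf (1-p)))
       (\<lambda>\<Psi>. real (card (greedy (contract M {e\<in>T. \<Psi> e}) N (x#xs))))" for n
  proof (induction n rule: less_induct)
    case (less n)
    fix M T I
    assume cT: "card T = n" and mM: "matroid E M" and MT: "M T" and NT: "\<forall>A. N A \<longrightarrow> A \<inter> T = {}"
      and sp: "\<forall>e\<in>set (x#xs). e \<in> T \<or> \<not> M (insert e T)" and Isub: "I \<subseteq> set (x#xs)"
      and MI: "M I" and NI: "N I"
    have mN: "matroid E N" and dist: "distinct (x#xs)" using Cons.prems by auto
    have fT: "finite T" using m_fin[OF mM MT] .
    show "c * real (card I) \<le> measure_pmf.expectation (Pi_pmf T False (\<lambda>_. bernoulli_pmf (1-p)))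
       (\<lambda>\<Psi>. real (card (greedy (contract M {e\<in>T. \<Psi> e}) N (x#xs))))"
    proof (cases "M {x} \<and> N {x}")
      case False
      have eq: "greedy (contract M {e\<in>T. \<Psi> e}) N (x#xs) = greedy (contract M {e\<in>T. \<Psi> e}) N xs" for \<Psi>
      proof (rule greedy_rej)
        show "\<not> (contract M {e\<in>T. \<Psi> e} {x} \<and> N {x})"
          using False m_sub[OF mM, of "{x} \<union> {e\<in>T. \<Psi> e}" "{x}"] unfolding contract_def by auto
      qed
      have xI: "x \<notin> I" using False m_sub[OF mM MI, of "{x}"] m_sub[OF mN NI, of "{x}"] by auto
      have "c * real (card I) \<le> measure_pmf.expectation (Pi_pmf T False (\<lambda>_. bernoulli_pmf (1-p)))
       (\<lambda>\<Psi>. real (card (greedy (contract M {e\<in>T. \<Psi> e}) N xs)))"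
        unfolding c_def
      proof (rule Cons.IH[of M N T I])
        show "\<forall>e\<in>set xs. e \<in> T \<or> \<not> M (insert e T)" using sp by simp
        show "I \<subseteq> set xs" using Isub xI by auto
        show "distinct xs" using dist by simp
      qed (rule mM mN MT NT MI NI)+
      then show ?thesis by (simp add: eq)
    next
      case True
      then have Mx: "M {x}" and Nx: "N {x}" by auto
      have xT: "x \<notin> T" using NT Nx by auto
      have nMxT: "\<not> M (insert x T)" using sp xT by auto
      obtain t where tT: "t \<in> T" and Mt: "M (insert x (T - {t}))" using fund[OF mM MT Mx xT nMxT] by blast
      define T' where "T' = T - {t}"
      have T_eq: "T = insert t T'" and tT': "t \<notin> T'" and fT': "finite T'" using tT fT unfolding T'_def by auto
      have cT': "card T' < n" using card_Diff1_less[OF fT tT] cT unfolding T'_def by simp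
      have Y: "M (insert x T')" using Mt unfolding T'_def .
      let ?P = "Pi_pmf T' False (\<lambda>_. bernoulli_pmf (1-p))"
      define F where "F = (\<lambda>\<Psi>. real (card (greedy (contract M {e\<in>T. \<Psi> e}) N (x#xs))))"
      have Fb: "\<bar>F g\<bar> \<le> real (length (x#xs))" for g
      proof -
        have a: "F g \<le> real (length (x#xs))" unfolding F_def by (rule of_nat_mono, rule card_greedy)
        show ?thesis using a by (simp add: F_def)
      qed
      have dec: "measure_pmf.expectation (Pi_pmf T False (\<lambda>_. bernoulli_pmf (1-p))) F =
          (1-p) * measure_pmf.expectation ?P (\<lambda>g. F (g(t:=True)))
        + (1-(1-p)) * measure_pmf.expectation ?P (\<lambda>g. F (g(t:=False)))"
        unfolding T_eq by (rule exp_insert[OF fT' tT']) (use p Fb in auto)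
      have F1: "F (g(t:=True)) = real (card (greedy (contract (contract M {t}) {e\<in>T'. g e}) N (x#xs)))" for g
      proof -
        have "{e\<in>T. (g(t:=True)) e} = insert t {e\<in>T'. g e}" using T_eq tT' by auto
        then show ?thesis unfolding F_def using contract_insert[of t "{e\<in>T'. g e}" M] tT' by simp
      qed
      have Mt1: "M {t}" using m_sub[OF mM MT] tT by auto
      obtain I1 where I1: "I1 \<subseteq> I - {t}" "M (insert t I1)" "card I \<le> card I1 + 1"
        using exch1[OF mM MI Mt1] by blast
      have E1: "c * real (card I1) \<le> measure_pmf.expectation ?P (\<lambda>g. F (g(t:=True)))"
        unfolding F1
      proof (rule less.IH[OF cT' refl])
        show "matroid E (contract M {t})" by (rule matroid_contract[OF mM Mt1])
        show "contract M {t} T'" using MT T_eq tT' unfolding contract_def by auto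
        show "\<forall>A. N A \<longrightarrow> A \<inter> T' = {}" using NT T_eq by auto
        show "\<forall>e\<in>set (x#xs). e \<in> T' \<or> \<not> contract M {t} (insert e T')"
        proof
          fix e assume e: "e \<in> set (x#xs)"
          show "e \<in> T' \<or> \<not> contract M {t} (insert e T')"
          proof (cases "e \<in> T")
            case True then show ?thesis using T_eq unfolding contract_def by auto
          next
            case False
            then have "\<not> M (insert e T)" using sp e by auto
            moreover have "insert e T' \<union> {t} = insert e T" using T_eq by auto
            ultimately show ?thesis unfolding contract_def by auto
          qed
        qed
        show "I1 \<subseteq> set (x#xs)" using I1 Isub by auto
        show "contract M {t} I1" using I1 unfolding contract_def by auto
        show "N I1" using m_sub[OF mN NI] I1 by auto
      qed
      let ?G0 = "\<lambda>g. greedy (contract (contract M {x}) {e\<in>T'. g e}) (contract N {x}) xs"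
      have F0: "F (g(t:=False)) = 1 + real (card (?G0 g))" for g
      proof -
        have S: "{e\<in>T. (g(t:=False)) e} = {e\<in>T'. g e}" using T_eq tT' by auto
        have xS: "x \<notin> {e\<in>T'. g e}" using xT T_eq by auto
        have acc: "contract M {e\<in>T'. g e} {x}"
          unfolding contract_def using xS m_sub[OF mM Y, of "{x} \<union> {e\<in>T'. g e}"] by auto
        have "greedy (contract M {e\<in>T'. g e}) N (x#xs) = insert x (?G0 g)"
          using greedy_acc[of "contract M {e\<in>T'. g e}" x N xs, OF acc Nx] contract_swap[OF xS, of M] by simp
        moreover have "x \<notin> ?G0 g" using greedy_sub[of "contract (contract M {x}) {e\<in>T'. g e}" "contract N {x}" xs] dist by auto
        moreover have "finite (?G0 g)" using greedy_sub by (meson List.finite_set finite_subset)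
        ultimately show ?thesis unfolding F_def S by simp
      qed
      obtain J where J: "J \<subseteq> I - {x}" "M (insert x J)" "card I \<le> card J + 1"
        using exch1[OF mM MI Mx] by blast
      have NJ: "N J" using m_sub[OF mN NI] J by auto
      obtain I2 where I2: "I2 \<subseteq> J - {x}" "N (insert x I2)" "card J \<le> card I2 + 1"
        using exch1[OF mN NJ Nx] by blast
      have E0': "c * real (card I2) \<le> measure_pmf.expectation ?P (\<lambda>g. real (card (?G0 g)))"
        unfolding c_def
      proof (rule Cons.IH)
        show "matroid E (contract M {x})" by (rule matroid_contract[OF mM Mx])
        show "matroid E (contract N {x})" by (rule matroid_contract[OF mN Nx])
        show "contract M {x} T'" using Y xT T_eq unfolding contract_def by auto
        show "\<forall>A. contract N {x} A \<longrightarrow> A \<inter> T' = {}" using NT T_eq unfolding contract_def by auto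
        show "\<forall>e\<in>set xs. e \<in> T' \<or> \<not> contract M {x} (insert e T')"
        proof
          fix e assume e: "e \<in> set xs"
          have ex: "e \<noteq> x" using e dist by auto
          show "e \<in> T' \<or> \<not> contract M {x} (insert e T')"
          proof (cases "e \<in> T")
            case True
            show ?thesis
            proof (cases "e = t")
              case True
              have "insert e T' \<union> {x} = insert x T" using T_eq True by auto
              then show ?thesis using nMxT unfolding contract_def by auto
            next
              case False then show ?thesis using \<open>e \<in> T\<close> T_eq by auto
            qed
          next
            case False
            have nMe: "\<not> M (insert e T)" using sp e False by auto
            show ?thesis
            proof (rule disjI2, rule notI)
              assume "contract M {x} (insert e T')"
              then have MB: "M (insert e (insert x T'))" unfolding contract_def by (simp add: insert_commute)
              have "card (insert e (insert x T')) = Suc (Suc (card T'))"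
                using fT' ex False xT T_eq by simp
              moreover have "card T = Suc (card T')" using T_eq tT' fT' by simp
              ultimately have "card T < card (insert e (insert x T'))" by simp
              then obtain z where z: "z \<in> insert e (insert x T') - T" "M (insert z T)"
                using m_aug[OF mM MT MB] by blast
              then have "z = e \<or> z = x" using T_eq by auto
              then show False using z nMe nMxT by auto
            qed
          qed
        qed
        show "I2 \<subseteq> set xs" using I2 J Isub by auto
        show "contract M {x} I2"
        proof -
          have "insert x I2 \<subseteq> insert x J" using I2 by auto
          then have "M (insert x I2)" using m_sub[OF mM J(2)] by blast
          then show ?thesis using I2 unfolding contract_def by auto
        qed
        show "contract N {x} I2" using I2 unfolding contract_def by auto
        show "distinct xs" using dist by simp
      qed
      have int: "integrable (measure_pmf ?P) (\<lambda>g. real (card (?G0 g)))"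
        by (rule integrable_Pi[where B="real (length xs)"]) (simp add: card_greedy)
      have E0: "measure_pmf.expectation ?P (\<lambda>g. F (g(t:=False))) = 1 + measure_pmf.expectation ?P (\<lambda>g. real (card (?G0 g)))"
      proof -
        have "measure_pmf.expectation ?P (\<lambda>g. 1 + real (card (?G0 g))) = measure_pmf.expectation ?P (\<lambda>g. 1) + measure_pmf.expectation ?P (\<lambda>g. real (card (?G0 g)))"
          by (rule Bochner_Integration.integral_add[OF _ int]) simp
        moreover have "measure_pmf.expectation ?P (\<lambda>g. 1::real) = 1" by simp
        ultimately show ?thesis unfolding F0 by simp
      qed
      have cI1: "c * (real (card I) - 1) \<le> c * real (card I1)"
        using I1(3) c0 by (intro mult_left_mono) auto
      have cI2: "c * (real (card I) - 2) \<le> c * real (card I2)"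
        using I2(3) J(3) c0 by (intro mult_left_mono) auto
      have id: "(1-p) * (c * (real (card I) - 1)) + p * (1 + c * (real (card I) - 2)) = c * real (card I)"
      proof -
        have cp: "c * (1+p) = p" unfolding c_def using p by (simp add: field_simps)
        have "(1-p) * (c * (real (card I) - 1)) + p * (1 + c * (real (card I) - 2)) = c * real (card I) + (p - c * (1+p))"
          by (simp add: algebra_simps)
        then show ?thesis using cp by simp
      qed
      have A1: "c * (real (card I) - 1) \<le> measure_pmf.expectation ?P (\<lambda>g. F (g(t:=True)))"
        using cI1 E1 by (rule order_trans)
      have A2: "1 + c * (real (card I) - 2) \<le> measure_pmf.expectation ?P (\<lambda>g. F (g(t:=False)))"
        unfolding E0 using cI2 E0' by simp
      have B1: "(1-p) * (c * (real (card I) - 1)) \<le> (1-p) * measure_pmf.expectation ?P (\<lambda>g. F (g(t:=True)))"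
        by (rule mult_left_mono[OF A1]) (use p in simp)
      have B2: "p * (1 + c * (real (card I) - 2)) \<le> p * measure_pmf.expectation ?P (\<lambda>g. F (g(t:=False)))"
        by (rule mult_left_mono[OF A2]) (use p in simp)
      have pp: "1 - (1 - p) = (p::real)" by simp
      have "c * real (card I) = (1-p) * (c * (real (card I) - 1)) + p * (1 + c * (real (card I) - 2))"
        by (rule id[symmetric])
      also have "\<dots> \<le> (1-p) * measure_pmf.expectation ?P (\<lambda>g. F (g(t:=True)))
        + p * measure_pmf.expectation ?P (\<lambda>g. F (g(t:=False)))"
        by (rule add_mono[OF B1 B2])
      also have "\<dots> = measure_pmf.expectation (Pi_pmf T False (\<lambda>_. bernoulli_pmf (1-p))) F"
        unfolding dec pp by (rule refl)
      finally have "c * real (card I) \<le> measure_pmf.expectation (Pi_pmf T False (\<lambda>_. bernoulli_pmf (1-p))) F" .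
      then show ?thesis unfolding F_def .
    qed
  qed
  show ?case
    using key[OF refl Cons.prems(1,3,4,5,6,7,8)] c_def by simp
qed


theorem lemma8:
  fixes E :: "'a set" and Mi Mj :: "'a set \<Rightarrow> bool"
    and T Etil Itil :: "'a set" and xs :: "'a list" and p :: real
  assumes "matroid E Mi" and "matroid E Mj"
    and "Mi T" and "Mj T"
    and "0 < p" and "p < 1"
    and "Etil \<subseteq> mspan E Mi T"
    and "Itil \<subseteq> Etil" and "Mi Itil" and "contract Mj T Itil"
    and "distinct xs" and "set xs = Etil"
  shows "measure_pmf.expectation (Pi_pmf T False (\<lambda>_. bernoulli_pmf (1 - p)))
           (\<lambda>\<Psi>. real (card (greedy (contract Mi {e \<in> T. \<Psi> e}) (contract Mj T) xs)))
         \<ge> 1 / (1 + p) * p * real (card Itil)"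
proof -
  have mN: "matroid E (contract Mj T)" by (rule matroid_contract[OF assms(2,4)])
  have NT: "\<forall>A. contract Mj T A \<longrightarrow> A \<inter> T = {}" unfolding contract_def by auto
  have sp: "\<forall>e\<in>set xs. e \<in> T \<or> \<not> Mi (insert e T)"
    using span_imp[OF assms(1,3)] assms(7,12) by blast
  have "p/(1+p) * real (card Itil) \<le> measure_pmf.expectation (Pi_pmf T False (\<lambda>_. bernoulli_pmf (1 - p)))
           (\<lambda>\<Psi>. real (card (greedy (contract Mi {e \<in> T. \<Psi> e}) (contract Mj T) xs)))"
    by (rule gen[OF assms(5,6) assms(1) mN assms(3) NT sp _ assms(9,10,11)]) (use assms(8,12) in auto)
  then show ?thesis by simp
qed

end
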